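(* Let $0<\delta\le1$, $1\le\alpha_n\le\log n$, let $\sigma(x)=1/(1+e^{-x})$ be the logistic squasher, let $m:\mathbb{R}^d\to\mathbb{R}$ be Lipschitz continuous with Lipschitz constant $C_{Lip}$, let $L,r,n\in\mathbb{N}$ with $L\ge2$, $r\ge2d$, $n\ge8d$, $n\ge\exp(r+1)$, and let $K,K_n\in\mathbb{N}$ with $K^d\le K_n$. Let $a_1,\dots,a_d,b_1,\dots,b_d\in[-\alpha_n,\alpha_n]$ with $b_i-a_i=\Delta$ for all $i\in\{1,\dots,d\}$, where $\Delta>0$. Then there exist $\alpha_1,\dots,\alpha_{K^d}\in[-\|m\|_\infty,\|m\|_\infty]$ and $u_1,v_1,\dots,u_{K^d},v_{K^d}\in[a_1,b_1)\times\dots\times[a_d,b_d)$ such that the following holds. For all pairwise distinct $j_1,\dots,j_{K^d}\in\{1,\dots,K_n\}$, every weight vector $\mathbf{w}$ satisfying, for all $k\in\{1,\dots,K^d\}$, $w^{(0)}_{j_k,j,j}=\frac{4d(\log n)^2}{\delta}$, $w^{(0)}_{j_k,j,0}=-\frac{4d(\log n)^2u_k^{(j)}}{\delta}$, $w^{(0)}_{j_k,j+d,j}=-\frac{4d(\log n)^2}{\delta}$, $w^{(0)}_{j_k,j+d,0}=\frac{4d(\log n)^2v_k^{(j)}}{\delta}$ for $j\in\{1,\dots,d\}$; $w^{(0)}_{j_k,s,t}=0$ if $s\le2d$, $s\ne t$, $s\ne t+d$, $t>0$; $w^{(1)}_{j_k,1,t}=8(\log n)^2$ for $t\in\{1,\dots,2d\}$,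 $w^{(1)}_{j_k,1,0}=-8(\log n)^2(2d-\frac12)$, $w^{(1)}_{j_k,1,t}=0$ for $t>2d$; $w^{(l)}_{j_k,1,1}=6(\log n)^2$, $w^{(l)}_{j_k,1,0}=-3(\log n)^2$ and $w^{(l)}_{j_k,1,t}=0$ for $t>1$, for $l\in\{2,\dots,L\}$; and every weight vector $\bar{\mathbf{w}}$ satisfying $\bar w^{(L)}_{1,1,j_k}=\alpha_k$ ($k\in\{1,\dots,K^d\}$), $\bar w^{(L)}_{1,1,k}=0$ ($k\notin\{j_1,\dots,j_{K^d}\}$) and $|w^{(l)}_{j_s,k,i}-\bar w^{(l)}_{j_s,k,i}|\le\log n$ for all $k,i$, $l\in\{0,\dots,L-1\}$, $s\in\{1,\dots,K^d\}$, we have \[ |f_{\bar{\mathbf{w}}}(x)-m(x)|\le c_{19}\Big(C_{Lip}\cdot\frac{\Delta}{K}+K^d\cdot\frac1n\Big) \] for all $x\in[a_1,b_1]\times\dots\times[a_d,b_d]$ which are not contained in \[ \bigcup_{j\in\{0,1,\dots,K\}}\bigcup_{i\in\{1,\dots,d\}}\Big\{x\in\mathbb{R}^d:\Big|x^{(i)}-\Big(a_i+j\cdot\frac{b_i-a_i}{K}\Big)\Big|<\delta\Big\}, \] where $c_{19}>0$ is a constant depending only on $d$ and $\|m\|_\infty$; and, if additionally $\delta\le\Delta/K$, then $|f_{\bar{\mathbf{w}}}(x)|\le\|m\|_\infty\cdot(3^d+K^d/n)$ for all $x\in\mathbb{R}^d$.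
   Context: For a weight vector $\bar{\mathbf{w}}=(\bar w^{(l)}_{k,i,j})$, $f_{\bar{\mathbf{w}}}(x)=\sum_{j=1}^{K_n}\bar w^{(L)}_{1,1,j}\bar f^{(L)}_{j,1}(x)$, where for $k\in\{1,\dots,K_n\}$, $i\in\{1,\dots,r\}$: $\bar f^{(l)}_{k,i}(x)=\sigma\big(\sum_{j=1}^r\bar w^{(l-1)}_{k,i,j}\bar f^{(l-1)}_{k,j}(x)+\bar w^{(l-1)}_{k,i,0}\big)$ for $l=2,\dots,L$ and $\bar f^{(1)}_{k,i}(x)=\sigma\big(\sum_{j=1}^d\bar w^{(0)}_{k,i,j}x^{(j)}+\bar w^{(0)}_{k,i,0}\big)$. $x^{(j)}$ and $u_k^{(j)}$ denote $j$-th components; $\|m\|_\infty=\sup_x|m(x)|$. *)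

theory Defs
  imports "HOL-Analysis.Analysis"
begin

definition sigma :: "real \<Rightarrow> real" where
  "sigma x = 1 / (1 + exp (- x))"

text \<open>Points of R^d are encoded as functions nat => real, with components
  x 1, ..., x d and all other entries equal to 0.\<close>
definition Rd :: "nat \<Rightarrow> (nat \<Rightarrow> real) set" where
  "Rd d = {x. \<forall>j. j \<notin> {1..d} \<longrightarrow> x j = 0}"

definition dist_d :: "nat \<Rightarrow> (nat \<Rightarrow> real) \<Rightarrow> (nat \<Rightarrow> real) \<Rightarrow> real" where
  "dist_d d x y = L2_set (\<lambda>j. x j - y j) {1..d}"

definition supnorm_d :: "nat \<Rightarrow> ((nat \<Rightarrow> real) \<Rightarrow> real) \<Rightarrow> real" where
  "supnorm_d d m = (SUP x\<in>Rd d. \<bar>m x\<bar>)"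

text \<open>Hidden neurons: weight vector w l k i j = w^{(l)}_{k,i,j}.
  fbar d r w l k i x = \bar f^{(l)}_{k,i}(x) for l >= 1.\<close>
fun fbar :: "nat \<Rightarrow> nat \<Rightarrow> (nat \<Rightarrow> nat \<Rightarrow> nat \<Rightarrow> nat \<Rightarrow> real) \<Rightarrow> nat \<Rightarrow> nat \<Rightarrow> nat
    \<Rightarrow> (nat \<Rightarrow> real) \<Rightarrow> real" where
  "fbar d r w 0 k i x = 0"
| "fbar d r w (Suc 0) k i x = sigma ((\<Sum>j=1..d. w 0 k i j * x j) + w 0 k i 0)"
| "fbar d r w (Suc (Suc l)) k i x =
     sigma ((\<Sum>j=1..r. w (Suc l) k i j * fbar d r w (Suc l) k j x) + w (Suc l) k i 0)"

definition net :: "nat \<Rightarrow> nat \<Rightarrow> nat \<Rightarrow> nat \<Rightarrow> (nat \<Rightarrow> nat \<Rightarrow> nat \<Rightarrow> nat \<Rightarrow> real)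
    \<Rightarrow> (nat \<Rightarrow> real) \<Rightarrow> real" where
  "net d r L Kn w x = (\<Sum>j=1..Kn. w L 1 1 j * fbar d r w L j 1 x)"

end

theory Submission
  imports Defs
begin

lemma sigma_pos: "0 < sigma y" unfolding sigma_def by (simp add: add_pos_pos)
lemma sigma_lt1: "sigma y < 1"
proof -
  have p: "1 < 1 + exp (-y)" by simp
  then show ?thesis unfolding sigma_def using p by (simp add: divide_less_eq) (smt (verit) exp_gt_zero)
qed
lemma sigma_lower: "1 - exp (- y) \<le> sigma y"
proof -
  have e: "0 < exp (-y)" by simp
  have "(1 - exp (-y)) * (1 + exp (-y)) \<le> 1" by (simp add: algebra_simps)
  moreover have p: "0 < 1 + exp (-y)" using e by linarith
  ultimately show ?thesis unfolding sigma_def by (simp add: le_divide_eq)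
qed
lemma sigma_upper: "sigma y \<le> exp y"
proof -
  have "exp y * (1 + exp (-y)) = exp y + 1" by (simp add: algebra_simps exp_minus)
  then have "1 \<le> exp y * (1 + exp (-y))" by simp
  then show ?thesis unfolding sigma_def by (simp add: field_simps add_pos_pos)
qed
lemma sigma_mono: "y \<le> z \<Longrightarrow> sigma y \<le> sigma z"
  unfolding sigma_def by (simp add: frac_le add_pos_pos)

lemma sigma_ge_N: "N \<le> y \<Longrightarrow> 1 - exp (-N) \<le> sigma y"
  using sigma_lower[of y] by (smt (verit) exp_le_cancel_iff)
lemma sigma_le_N: "y \<le> -N \<Longrightarrow> sigma y \<le> exp (-N)"
  using sigma_upper[of y] by (smt (verit) exp_le_cancel_iff)

lemma exp3: "exp (3::real) \<ge> 8"
proof -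
  have "exp (3::real) = exp 1 * exp 1 * exp 1" by (simp flip: exp_add)
  moreover have "exp (1::real) \<ge> 2" using exp_ge_add_one_self[of 1] by simp
  moreover have "(2::real)*2*2 \<le> exp 1 * exp 1 * exp 1"
    using \<open>exp (1::real) \<ge> 2\<close> by (intro mult_mono) auto
  ultimately show ?thesis by simp
qed

lemma expmN: "N \<ge> 3 \<Longrightarrow> exp (- N) \<le> (1/8::real)"
proof -
  assume "N \<ge> 3"
  then have "exp 3 \<le> exp N" by simp
  with exp3 have "exp N \<ge> 8" by linarith
  then show ?thesis by (simp add: exp_minus field_simps)
qed

lemma exp_m2: "exp (-2::real) \<le> 1/4"
proof -
  have "exp (2::real) = exp 1 * exp 1" by (simp flip: exp_add)
  moreover have "exp (1::real) \<ge> 2" using exp_ge_add_one_self[of 1] by simp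
  moreover have "(2::real)*2 \<le> exp 1 * exp 1"
    using \<open>exp (1::real) \<ge> 2\<close> by (intro mult_mono) auto
  ultimately have "exp (2::real) \<ge> 4" by simp
  then show ?thesis by (simp add: exp_minus field_simps)
qed

lemma noise:
  fixes W V h :: "nat \<Rightarrow> real"
  assumes "finite A" "\<forall>t\<in>A. \<bar>W t - V t\<bar> \<le> N" "\<bar>W0 - V0\<bar> \<le> N"
  shows "\<bar>(\<Sum>t\<in>A. W t * h t) + W0 - ((\<Sum>t\<in>A. V t * h t) + V0)\<bar> \<le> N * ((\<Sum>t\<in>A. \<bar>h t\<bar>) + 1)"
proof -
  have "(\<Sum>t\<in>A. W t * h t) + W0 - ((\<Sum>t\<in>A. V t * h t) + V0) = (\<Sum>t\<in>A. (W t - V t) * h t) + (W0 - V0)"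
    by (simp add: sum_subtractf algebra_simps)
  also have "\<bar>\<dots>\<bar> \<le> (\<Sum>t\<in>A. \<bar>(W t - V t) * h t\<bar>) + \<bar>W0 - V0\<bar>"
    by (rule order_trans[OF abs_triangle_ineq add_mono[OF sum_abs order_refl]])
  also have "\<dots> \<le> (\<Sum>t\<in>A. N * \<bar>h t\<bar>) + N"
    apply (rule add_mono[OF sum_mono])
    using assms by (auto simp: abs_mult intro!: mult_right_mono)
  finally show ?thesis by (simp add: sum_distrib_left algebra_simps)
qed

lemma fbar_range: "1 \<le> p \<Longrightarrow> 0 < fbar d r w p k i x \<and> fbar d r w p k i x < 1"
proof -
  assume "1 \<le> p"
  then obtain l where "p = Suc l" by (cases p) auto
  then show ?thesis by (cases l) (auto simp: sigma_pos sigma_lt1)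
qed

lemma upper_step:
  fixes W V h :: "nat \<Rightarrow> real"
  assumes N3: "N \<ge> 3" and r1: "r \<ge> 1" and rN: "real r + 1 \<le> N"
    and WV: "\<forall>t. \<bar>V t - W t\<bar> \<le> N"
    and V1: "V 1 = 6 * N^2" and V0: "V 0 = - 3 * N^2" and Vt: "\<forall>t>1. V t = 0"
    and h: "\<forall>t\<in>{1..r}. 0 \<le> h t \<and> h t \<le> 1"
  shows "h 1 \<ge> 5/6 \<Longrightarrow> sigma ((\<Sum>t=1..r. W t * h t) + W 0) \<ge> 1 - exp (-N)"
    and "h 1 \<le> 1/6 \<Longrightarrow> sigma ((\<Sum>t=1..r. W t * h t) + W 0) \<le> exp (-N)"
proof -
  have nz: "\<bar>(\<Sum>t=1..r. W t * h t) + W 0 - ((\<Sum>t=1..r. V t * h t) + V 0)\<bar> \<le> N * ((\<Sum>t=1..r. \<bar>h t\<bar>) + 1)"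
    by (rule noise) (use WV in \<open>auto simp: abs_minus_commute\<close>)
  have "(\<Sum>t=1..r. \<bar>h t\<bar>) \<le> of_nat (card {1..r}) * 1"
    by (rule sum_bounded_above) (use h in auto)
  then have sh: "(\<Sum>t=1..r. \<bar>h t\<bar>) \<le> real r" by simp
  have N0: "N \<ge> 0" using N3 by simp
  have "N * ((\<Sum>t=1..r. \<bar>h t\<bar>) + 1) \<le> N * (real r + 1)"
    using sh N0 by (intro mult_left_mono) auto
  also have "\<dots> \<le> N * N" using rN N0 by (intro mult_left_mono) auto
  finally have nz2: "\<bar>(\<Sum>t=1..r. W t * h t) + W 0 - ((\<Sum>t=1..r. V t * h t) + V 0)\<bar> \<le> N^2"
    using nz by (simp add: power2_eq_square)
  have "(\<Sum>t=1..r. V t * h t) = V 1 * h 1 + (\<Sum>t\<in>{1..r} - {1}. V t * h t)"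
    using r1 by (subst sum.remove[of _ 1]) auto
  also have "(\<Sum>t\<in>{1..r} - {1}. V t * h t) = 0" using Vt by (intro sum.neutral) auto
  finally have sv: "(\<Sum>t=1..r. V t * h t) = 6 * N^2 * h 1" using V1 by simp
  have NN: "N \<le> N^2" using N3 by (simp add: power2_eq_square)
  show "h 1 \<ge> 5/6 \<Longrightarrow> sigma ((\<Sum>t=1..r. W t * h t) + W 0) \<ge> 1 - exp (-N)"
  proof -
    assume a: "h 1 \<ge> 5/6"
    have "N^2 * h 1 \<ge> N^2 * (5/6)" using a by (intro mult_left_mono) auto
    then have "(\<Sum>t=1..r. W t * h t) + W 0 \<ge> N" using nz2 sv V0 NN by (simp add: abs_le_iff)
    then show ?thesis by (rule sigma_ge_N)
  qed
  show "h 1 \<le> 1/6 \<Longrightarrow> sigma ((\<Sum>t=1..r. W t * h t) + W 0) \<le> exp (-N)"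
  proof -
    assume a: "h 1 \<le> 1/6"
    have "N^2 * h 1 \<le> N^2 * (1/6)" using a by (intro mult_left_mono) auto
    then have "(\<Sum>t=1..r. W t * h t) + W 0 \<le> -N" using nz2 sv V0 NN by (simp add: abs_le_iff)
    then show ?thesis by (rule sigma_le_N)
  qed
qed

lemma layer1:
  fixes W V h :: "nat \<Rightarrow> real"
  assumes N3: "N \<ge> 3" and d1: "d \<ge> 1" and dr: "2 * d \<le> r" and rN: "real r + 1 \<le> N"
    and WV: "\<forall>t. \<bar>V t - W t\<bar> \<le> N"
    and V1: "\<forall>t\<in>{1..2*d}. V t = 8 * N^2" and V0: "V 0 = - 8 * N^2 * (2 * real d - 1/2)"
    and Vt: "\<forall>t>2*d. V t = 0"
    and h: "\<forall>t\<in>{1..r}. 0 \<le> h t \<and> h t \<le> 1"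
  shows "(\<forall>t\<in>{1..2*d}. h t \<ge> 1 - 1/(16 * real d)) \<Longrightarrow> sigma ((\<Sum>t=1..r. W t * h t) + W 0) \<ge> 1 - exp (-N)"
    and "(\<exists>t\<in>{1..2*d}. h t \<le> 1/4) \<Longrightarrow> sigma ((\<Sum>t=1..r. W t * h t) + W 0) \<le> exp (-N)"
proof -
  have nz: "\<bar>(\<Sum>t=1..r. W t * h t) + W 0 - ((\<Sum>t=1..r. V t * h t) + V 0)\<bar> \<le> N * ((\<Sum>t=1..r. \<bar>h t\<bar>) + 1)"
    by (rule noise) (use WV in \<open>auto simp: abs_minus_commute\<close>)
  have "(\<Sum>t=1..r. \<bar>h t\<bar>) \<le> of_nat (card {1..r}) * 1"
    by (rule sum_bounded_above) (use h in auto)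
  then have sh: "(\<Sum>t=1..r. \<bar>h t\<bar>) \<le> real r" by simp
  have N0: "N \<ge> 0" using N3 by simp
  have "N * ((\<Sum>t=1..r. \<bar>h t\<bar>) + 1) \<le> N * (real r + 1)"
    using sh N0 by (intro mult_left_mono) auto
  also have "\<dots> \<le> N * N" using rN N0 by (intro mult_left_mono) auto
  finally have nz2: "\<bar>(\<Sum>t=1..r. W t * h t) + W 0 - ((\<Sum>t=1..r. V t * h t) + V 0)\<bar> \<le> N^2"
    using nz by (simp add: power2_eq_square)
  have "(\<Sum>t=1..r. V t * h t) = (\<Sum>t=1..2*d. V t * h t)"
    using dr Vt by (intro sum.mono_neutral_right) auto
  also have "\<dots> = (\<Sum>t=1..2*d. 8 * N^2 * h t)" using V1 by (intro sum.cong) auto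
  finally have sv: "(\<Sum>t=1..r. V t * h t) = 8 * N^2 * (\<Sum>t=1..2*d. h t)" by (simp add: sum_distrib_left)
  have NN: "N \<le> N^2" using N3 by (simp add: power2_eq_square)
  have V0': "V 0 = 8 * N^2 * (1/2) - 8 * N^2 * (2 * real d)" using V0 by (simp add: algebra_simps)
  show "(\<forall>t\<in>{1..2*d}. h t \<ge> 1 - 1/(16 * real d)) \<Longrightarrow> sigma ((\<Sum>t=1..r. W t * h t) + W 0) \<ge> 1 - exp (-N)"
  proof -
    assume a: "\<forall>t\<in>{1..2*d}. h t \<ge> 1 - 1/(16 * real d)"
    have "(\<Sum>t=1..2*d. (1 - 1/(16 * real d))) \<le> (\<Sum>t=1..2*d. h t)" using a by (intro sum_mono) auto
    moreover have "(\<Sum>t=1..2*d. (1 - 1/(16 * real d))) = 2 * real d - 1/8" using d1 by (simp add: field_simps)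
    ultimately have s: "2 * real d - 1/8 \<le> (\<Sum>t=1..2*d. h t)" by simp
    have "8 * N^2 * (2 * real d - 1/8) \<le> 8 * N^2 * (\<Sum>t=1..2*d. h t)" using s by (intro mult_left_mono) auto
    then have "(\<Sum>t=1..r. W t * h t) + W 0 \<ge> N" using nz2 sv V0' NN by (simp add: abs_le_iff algebra_simps)
    then show ?thesis by (rule sigma_ge_N)
  qed
  show "(\<exists>t\<in>{1..2*d}. h t \<le> 1/4) \<Longrightarrow> sigma ((\<Sum>t=1..r. W t * h t) + W 0) \<le> exp (-N)"
  proof -
    assume "\<exists>t\<in>{1..2*d}. h t \<le> 1/4"
    then obtain t0 where t0: "t0 \<in> {1..2*d}" "h t0 \<le> 1/4" by blast
    have "(\<Sum>t=1..2*d. h t) = h t0 + (\<Sum>t\<in>{1..2*d} - {t0}. h t)"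
      using t0 by (subst sum.remove[of _ t0]) auto
    moreover have "(\<Sum>t\<in>{1..2*d} - {t0}. h t) \<le> of_nat (card ({1..2*d} - {t0})) * 1"
      by (rule sum_bounded_above) (use h dr in auto)
    moreover have "card ({1..2*d} - {t0}) = 2 * d - 1" using t0 by simp
    ultimately have s: "(\<Sum>t=1..2*d. h t) \<le> 2 * real d - 3/4" using t0 d1 by (simp add: of_nat_diff)
    have "8 * N^2 * (\<Sum>t=1..2*d. h t) \<le> 8 * N^2 * (2 * real d - 3/4)" using s by (intro mult_left_mono) auto
    then have "(\<Sum>t=1..r. W t * h t) + W 0 \<le> -N" using nz2 sv V0' NN by (simp add: abs_le_iff algebra_simps)
    then show ?thesis by (rule sigma_le_N)
  qed
qed

lemma layer0:
  fixes W V x :: "nat \<Rightarrow> real"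
  assumes WV: "\<forall>t. \<bar>V t - W t\<bar> \<le> N" and j: "j \<in> {1..d}" and Vt: "\<forall>t\<in>{1..d}. t \<noteq> j \<longrightarrow> V t = 0"
  shows "\<exists>\<eta>. \<bar>\<eta>\<bar> \<le> N * ((\<Sum>t=1..d. \<bar>x t\<bar>) + 1) \<and> (\<Sum>t=1..d. W t * x t) + W 0 = V j * x j + V 0 + \<eta>"
proof -
  have nz: "\<bar>(\<Sum>t=1..d. W t * x t) + W 0 - ((\<Sum>t=1..d. V t * x t) + V 0)\<bar> \<le> N * ((\<Sum>t=1..d. \<bar>x t\<bar>) + 1)"
    by (rule noise) (use WV in \<open>auto simp: abs_minus_commute\<close>)
  have "(\<Sum>t=1..d. V t * x t) = V j * x j + (\<Sum>t\<in>{1..d} - {j}. V t * x t)"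
    using j by (subst sum.remove[of _ j]) auto
  also have "(\<Sum>t\<in>{1..d} - {j}. V t * x t) = 0" using Vt by (intro sum.neutral) auto
  finally have "(\<Sum>t=1..d. V t * x t) = V j * x j" by simp
  then show ?thesis using nz
    by (intro exI[of _ "(\<Sum>t=1..d. W t * x t) + W 0 - ((\<Sum>t=1..d. V t * x t) + V 0)"]) auto
qed


lemma fbar1: "fbar d r w 1 k i x = sigma ((\<Sum>j=1..d. w 0 k i j * x j) + w 0 k i 0)"
  by (simp add: One_nat_def)
lemma fbar2: "fbar d r w 2 k i x = sigma ((\<Sum>j=1..r. w 1 k i j * fbar d r w 1 k j x) + w 1 k i 0)"
  by (simp add: numeral_2_eq_2)

lemma levels:
  fixes w W :: "nat \<Rightarrow> nat \<Rightarrow> nat \<Rightarrow> nat \<Rightarrow> real"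
  assumes N3: "N \<ge> 3" and r1: "r \<ge> 1" and rN: "real r + 1 \<le> N"
    and Hl: "\<forall>l\<in>{2..L}. w l q 1 1 = 6 * N^2 \<and> w l q 1 0 = - 3 * N^2 \<and> (\<forall>t>1. w l q 1 t = 0)"
    and Hp: "\<forall>l\<in>{0..L-1}. \<forall>k i. \<bar>w l q k i - W l q k i\<bar> \<le> N"
  shows "2 \<le> p \<Longrightarrow> p \<le> L \<Longrightarrow> fbar d r W 2 q 1 x \<ge> 1 - exp (-N) \<Longrightarrow> fbar d r W p q 1 x \<ge> 1 - exp (-N)"
    and "2 \<le> p \<Longrightarrow> p \<le> L \<Longrightarrow> fbar d r W 2 q 1 x \<le> exp (-N) \<Longrightarrow> fbar d r W p q 1 x \<le> exp (-N)"
proof -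
  have e8: "exp (-N) \<le> 1/8" using expmN N3 by simp
  have hr: "\<forall>t\<in>{1..r}. 0 \<le> fbar d r W p q t x \<and> fbar d r W p q t x \<le> 1" if "p \<ge> 1" for p
    using fbar_range[OF that] by (auto intro: less_imp_le)
  show "2 \<le> p \<Longrightarrow> p \<le> L \<Longrightarrow> fbar d r W 2 q 1 x \<ge> 1 - exp (-N) \<Longrightarrow> fbar d r W p q 1 x \<ge> 1 - exp (-N)"
  proof (induction p)
    case 0 then show ?case by simp
  next
    case (Suc p)
    show ?case
    proof (cases "p \<le> 1")
      case True
      then have "Suc p = 2" using Suc.prems by simp
      then show ?thesis using Suc.prems(3) by metis
    next
      case False
      then obtain l where pl: "p = Suc l" by (cases p) auto
      have IH: "fbar d r W p q 1 x \<ge> 1 - exp (-N)" using Suc False by simp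
      have eq: "fbar d r W (Suc p) q 1 x = sigma ((\<Sum>t=1..r. W p q 1 t * fbar d r W p q t x) + W p q 1 0)"
        using pl by simp
      have pL: "p \<in> {0..L-1}" "p \<in> {2..L}" using Suc.prems False by auto
      show ?thesis unfolding eq
        by (rule upper_step(1)[OF N3 r1 rN, where V="w p q 1"])
          (use Hp pL Hl hr[of p] False IH e8 in \<open>auto simp: abs_minus_commute\<close>)
    qed
  qed
  show "2 \<le> p \<Longrightarrow> p \<le> L \<Longrightarrow> fbar d r W 2 q 1 x \<le> exp (-N) \<Longrightarrow> fbar d r W p q 1 x \<le> exp (-N)"
  proof (induction p)
    case 0 then show ?case by simp
  next
    case (Suc p)
    show ?case
    proof (cases "p \<le> 1")
      case True
      then have "Suc p = 2" using Suc.prems by simp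
      then show ?thesis using Suc.prems(3) by metis
    next
      case False
      then obtain l where pl: "p = Suc l" by (cases p) auto
      have IH: "fbar d r W p q 1 x \<le> exp (-N)" using Suc False by simp
      have eq: "fbar d r W (Suc p) q 1 x = sigma ((\<Sum>t=1..r. W p q 1 t * fbar d r W p q t x) + W p q 1 0)"
        using pl by simp
      have pL: "p \<in> {0..L-1}" "p \<in> {2..L}" using Suc.prems False by auto
      show ?thesis unfolding eq
        by (rule upper_step(2)[OF N3 r1 rN, where V="w p q 1"])
          (use Hp pL Hl hr[of p] False IH e8 in \<open>auto simp: abs_minus_commute\<close>)
    qed
  qed
qed

lemma neuron:
  fixes w W :: "nat \<Rightarrow> nat \<Rightarrow> nat \<Rightarrow> nat \<Rightarrow> real" and u v x :: "nat \<Rightarrow> real"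
  assumes N3: "N \<ge> 3" and d1: "d \<ge> 1" and dr: "2 * d \<le> r" and rN: "real r + 1 \<le> N"
    and L2: "L \<ge> 2" and dpos: "\<delta> > 0"
    and H0: "\<forall>j\<in>{1..d}. w 0 q j j = 4 * real d * N^2 / \<delta> \<and> w 0 q j 0 = - (4 * real d * N^2 * u j / \<delta>) \<and>
             w 0 q (j + d) j = - (4 * real d * N^2 / \<delta>) \<and> w 0 q (j + d) 0 = 4 * real d * N^2 * v j / \<delta>"
    and Hz: "\<forall>s t. s \<le> 2 * d \<and> s \<noteq> t \<and> s \<noteq> t + d \<and> t > 0 \<longrightarrow> w 0 q s t = 0"
    and H1a: "\<forall>t\<in>{1..2*d}. w 1 q 1 t = 8 * N^2"
    and H1b: "w 1 q 1 0 = - 8 * N^2 * (2 * real d - 1/2)"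
    and H1c: "\<forall>t > 2 * d. w 1 q 1 t = 0"
    and Hl: "\<forall>l\<in>{2..L}. w l q 1 1 = 6 * N^2 \<and> w l q 1 0 = - 3 * N^2 \<and> (\<forall>t>1. w l q 1 t = 0)"
    and Hp: "\<forall>l\<in>{0..L-1}. \<forall>k i. \<bar>w l q k i - W l q k i\<bar> \<le> N"
  shows "(\<forall>t\<in>{1..2*d}. fbar d r W 1 q t x \<ge> 1 - 1/(16 * real d)) \<Longrightarrow> fbar d r W L q 1 x \<ge> 1 - exp (-N)"
    and "(\<exists>t\<in>{1..2*d}. fbar d r W 1 q t x \<le> 1/4) \<Longrightarrow> fbar d r W L q 1 x \<le> exp (-N)"
    and "j\<in>{1..d} \<Longrightarrow> \<exists>\<eta>. \<bar>\<eta>\<bar> \<le> N * ((\<Sum>t=1..d. \<bar>x t\<bar>) + 1) \<and>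
           fbar d r W 1 q j x = sigma (4 * real d * N^2 / \<delta> * (x j - u j) + \<eta>)"
    and "j\<in>{1..d} \<Longrightarrow> \<exists>\<eta>. \<bar>\<eta>\<bar> \<le> N * ((\<Sum>t=1..d. \<bar>x t\<bar>) + 1) \<and>
           fbar d r W 1 q (j + d) x = sigma (4 * real d * N^2 / \<delta> * (v j - x j) + \<eta>)"
proof -
  have r1: "r \<ge> 1" using d1 dr by simp
  have hr: "\<forall>t\<in>{1..r}. 0 \<le> fbar d r W 1 q t x \<and> fbar d r W 1 q t x \<le> 1"
    using fbar_range[of 1] by (auto intro: less_imp_le)
  have W1: "\<forall>t. \<bar>w 1 q 1 t - W 1 q 1 t\<bar> \<le> N" using Hp L2 by auto
  show "(\<forall>t\<in>{1..2*d}. fbar d r W 1 q t x \<ge> 1 - 1/(16 * real d)) \<Longrightarrow> fbar d r W L q 1 x \<ge> 1 - exp (-N)"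
  proof -
    assume a: "\<forall>t\<in>{1..2*d}. fbar d r W 1 q t x \<ge> 1 - 1/(16 * real d)"
    have "fbar d r W 2 q 1 x \<ge> 1 - exp (-N)" unfolding fbar2
      by (rule layer1(1)[OF N3 d1 dr rN _ H1a H1b H1c hr a]) (use W1 in \<open>auto simp: abs_minus_commute\<close>)
    then show ?thesis using levels(1)[where N=N and r=r and L=L and w=w and q=q and W=W and p=L and d=d and x=x, OF N3 r1 rN Hl Hp] L2 by simp
  qed
  show "(\<exists>t\<in>{1..2*d}. fbar d r W 1 q t x \<le> 1/4) \<Longrightarrow> fbar d r W L q 1 x \<le> exp (-N)"
  proof -
    assume a: "\<exists>t\<in>{1..2*d}. fbar d r W 1 q t x \<le> 1/4"
    have "fbar d r W 2 q 1 x \<le> exp (-N)" unfolding fbar2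
      by (rule layer1(2)[OF N3 d1 dr rN _ H1a H1b H1c hr a]) (use W1 in \<open>auto simp: abs_minus_commute\<close>)
    then show ?thesis using levels(2)[where N=N and r=r and L=L and w=w and q=q and W=W and p=L and d=d and x=x, OF N3 r1 rN Hl Hp] L2 by simp
  qed
  have W0: "\<forall>s t. \<bar>w 0 q s t - W 0 q s t\<bar> \<le> N" using Hp by auto
  show "j\<in>{1..d} \<Longrightarrow> \<exists>\<eta>. \<bar>\<eta>\<bar> \<le> N * ((\<Sum>t=1..d. \<bar>x t\<bar>) + 1) \<and>
           fbar d r W 1 q j x = sigma (4 * real d * N^2 / \<delta> * (x j - u j) + \<eta>)"
  proof -
    assume j: "j \<in> {1..d}"
    have Vt: "\<forall>t\<in>{1..d}. t \<noteq> j \<longrightarrow> w 0 q j t = 0" using Hz j by auto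
    obtain \<eta> where e: "\<bar>\<eta>\<bar> \<le> N * ((\<Sum>t=1..d. \<bar>x t\<bar>) + 1)"
      "(\<Sum>t=1..d. W 0 q j t * x t) + W 0 q j 0 = w 0 q j j * x j + w 0 q j 0 + \<eta>"
      using layer0[of "w 0 q j" "W 0 q j" N j d x] W0 j Vt by blast
    have h4: "w 0 q j j = 4 * real d * N^2 / \<delta>" "w 0 q j 0 = - (4 * real d * N^2 * u j / \<delta>)"
      using H0 j by auto
    have "w 0 q j j * x j + w 0 q j 0 = 4 * real d * N^2 / \<delta> * (x j - u j)"
      unfolding h4 using dpos by (simp add: field_simps)
    then show ?thesis using e unfolding fbar1 by auto
  qed
  show "j\<in>{1..d} \<Longrightarrow> \<exists>\<eta>. \<bar>\<eta>\<bar> \<le> N * ((\<Sum>t=1..d. \<bar>x t\<bar>) + 1) \<and>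
           fbar d r W 1 q (j + d) x = sigma (4 * real d * N^2 / \<delta> * (v j - x j) + \<eta>)"
  proof -
    assume j: "j \<in> {1..d}"
    have Vt: "\<forall>t\<in>{1..d}. t \<noteq> j \<longrightarrow> w 0 q (j + d) t = 0" using Hz j by auto
    obtain \<eta> where e: "\<bar>\<eta>\<bar> \<le> N * ((\<Sum>t=1..d. \<bar>x t\<bar>) + 1)"
      "(\<Sum>t=1..d. W 0 q (j + d) t * x t) + W 0 q (j + d) 0 = w 0 q (j + d) j * x j + w 0 q (j + d) 0 + \<eta>"
      using layer0[of "w 0 q (j + d)" "W 0 q (j + d)" N j d x] W0 j Vt by blast
    have h4: "w 0 q (j + d) j = - (4 * real d * N^2 / \<delta>)" "w 0 q (j + d) 0 = 4 * real d * N^2 * v j / \<delta>"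
      using H0 j by auto
    have "w 0 q (j + d) j * x j + w 0 q (j + d) 0 = 4 * real d * N^2 / \<delta> * (v j - x j)"
      unfolding h4 using dpos by (simp add: field_simps)
    then show ?thesis using e unfolding fbar1 by auto
  qed
qed

lemma key_real:
  fixes D N \<delta> S E :: real
  assumes D1: "D \<ge> 1" and N3: "N \<ge> 3" and d0: "0 < \<delta>" and d1: "\<delta> \<le> 1" and S0: "S \<ge> 0" and E0: "E \<ge> 0"
    and hE: "4 * D * N^2 * E = \<delta> * (2 + N * (S + 1))" and hS: "S \<le> D * (N + E)"
  shows "E \<le> \<delta> / 2"
proof -
  define X where "X = N * D * E"
  have X0: "X \<ge> 0" unfolding X_def using D1 N3 E0 by simp
  have "N * S \<le> N * (D * (N + E))" using hS N3 by (intro mult_left_mono) auto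
  then have "\<delta> * (2 + N * (S + 1)) \<le> \<delta> * (2 + N + D * N^2 + X)"
    using d0 by (intro mult_left_mono) (auto simp: X_def algebra_simps power2_eq_square)
  also have "\<dots> \<le> \<delta> * (2 + N + D * N^2) + X" using d1 X0 d0
    by (simp add: distrib_left mult_left_le_one_le)
  finally have "4 * N * X \<le> \<delta> * (2 + N + D * N^2) + X" using hE by (simp add: X_def power2_eq_square algebra_simps)
  then have A: "X * (4 * N - 1) \<le> \<delta> * (2 + N + D * N^2)" by (simp add: algebra_simps)
  have B: "2 + N + D * N^2 \<le> (N * D / 2) * (4 * N - 1)"
  proof -
    have "D * N * (N - 1/2) \<ge> 1 * N * (N - 1/2)" using D1 N3 by (intro mult_right_mono) auto
    then have "D * N * N \<ge> N * N - N / 2 + D * N / 2" by (simp add: algebra_simps)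
    moreover have "N * N \<ge> 3 * N" using N3 by (intro mult_right_mono) auto
    ultimately have "2 + N + D * N * N \<le> 2 * D * N * N - D * N / 2" using N3 by linarith
    moreover have "(N * D / 2) * (4 * N - 1) = 2 * D * N * N - D * N / 2" "D * N^2 = D * N * N"
      by (simp_all add: algebra_simps power2_eq_square)
    ultimately show ?thesis by linarith
  qed
  show ?thesis
  proof (rule ccontr)
    assume "\<not> E \<le> \<delta> / 2"
    then have "X > N * D * (\<delta> / 2)" unfolding X_def using D1 N3 by (intro mult_strict_left_mono) auto
    then have "X * (4 * N - 1) > N * D * (\<delta> / 2) * (4 * N - 1)" using N3 by (intro mult_strict_right_mono) auto
    moreover have "\<delta> * (2 + N + D * N^2) \<le> \<delta> * ((N * D / 2) * (4 * N - 1))" using B d0 by (intro mult_left_mono) auto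
    moreover have "\<delta> * ((N * D / 2) * (4 * N - 1)) = N * D * (\<delta> / 2) * (4 * N - 1)" by (simp add: algebra_simps)
    ultimately show False using A by linarith
  qed
qed

lemma count3:
  fixes y :: real
  shows "finite {i::nat. y - 3/2 < real i \<and> real i < y + 1/2}"
    and "card {i::nat. y - 3/2 < real i \<and> real i < y + 1/2} \<le> 3"
proof -
  let ?T = "{i::nat. y - 3/2 < real i \<and> real i < y + 1/2}"
  have sub: "?T \<subseteq> nat ` {\<lfloor>y\<rfloor> - 1 .. \<lfloor>y\<rfloor> + 1}"
  proof
    fix i assume "i \<in> ?T"
    then have a: "y - 3/2 < real i" "real i < y + 1/2" by auto
    have "of_int \<lfloor>y\<rfloor> \<le> y" "y < of_int \<lfloor>y\<rfloor> + 1" by linarith+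
    then have "int i \<ge> \<lfloor>y\<rfloor> - 1" "int i \<le> \<lfloor>y\<rfloor> + 1" using a by linarith+
    then show "i \<in> nat ` {\<lfloor>y\<rfloor> - 1 .. \<lfloor>y\<rfloor> + 1}" by (intro image_eqI[of _ _ "int i"]) auto
  qed
  show "finite ?T" by (rule finite_subset[OF sub]) auto
  have "card ?T \<le> card (nat ` {\<lfloor>y\<rfloor> - 1 .. \<lfloor>y\<rfloor> + 1})" by (rule card_mono[OF _ sub]) auto
  also have "\<dots> \<le> card {\<lfloor>y\<rfloor> - 1 .. \<lfloor>y\<rfloor> + 1}" by (rule card_image_le) auto
  also have "\<dots> = 3" by simp
  finally show "card ?T \<le> 3" .
qed

lemma cell_of:
  fixes a b x w \<delta> :: real
  assumes w0: "w > 0" and K1: "K \<ge> 1" and bK: "b = a + real K * w" and ax: "a \<le> x" and xb: "x \<le> b"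
    and good: "\<forall>jj\<in>{0..K}. \<bar>x - (a + real jj * (b - a) / real K)\<bar> \<ge> \<delta>" and d0: "\<delta> > 0"
  shows "\<exists>i. i < K \<and> a + real i * w + \<delta> \<le> x \<and> x + \<delta> \<le> a + real (i + 1) * w"
proof -
  have gd: "\<bar>x - (a + real jj * w)\<bar> \<ge> \<delta>" if "jj \<le> K" for jj
  proof -
    have "real jj * (b - a) / real K = real jj * w" using bK K1 by simp
    then show ?thesis using good that by force
  qed
  define y where "y = (x - a) / w"
  have y0: "y \<ge> 0" unfolding y_def using ax w0 by simp
  have yK: "y \<le> real K" unfolding y_def using xb bK w0 by (simp add: divide_le_eq)
  define i where "i = nat \<lfloor>y\<rfloor>"
  have ri: "real i = of_int \<lfloor>y\<rfloor>" unfolding i_def using y0 by simp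
  have iy: "real i \<le> y" "y < real i + 1" using ri by linarith+
  have "real i * w \<le> y * w" using iy w0 by (intro mult_right_mono) auto
  then have l: "a + real i * w \<le> x" unfolding y_def using w0 by simp
  have "(x - a) / w < real i + 1" using iy unfolding y_def by simp
  then have "x - a < (real i + 1) * w" using w0 by (simp add: divide_less_eq)
  then have u: "x < a + real (i + 1) * w" by (simp add: algebra_simps)
  have iK: "i \<le> K" using iy yK by linarith
  have l2: "a + real i * w + \<delta> \<le> x" using gd[OF iK] l by linarith
  have iK2: "i < K"
  proof (rule ccontr)
    assume "\<not> i < K" then have "i = K" using iK by simp
    then show False using l2 xb bK d0 by simp
  qed
  have u2: "x + \<delta> \<le> a + real (i + 1) * w" using gd[of "i + 1"] iK2 u by simp
  show ?thesis using iK2 l2 u2 by blast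
qed

lemma on0:
  fixes N \<delta> z \<eta> S :: real
  assumes N3: "N \<ge> 3" and d1: "d \<ge> 1" and d0: "\<delta> > 0" and z: "z \<ge> 3 * \<delta> / 4"
    and eta: "\<bar>\<eta>\<bar> \<le> N * (S + 1)" and S: "S \<le> real d * N" and nN: "real n = exp N" and n8: "n \<ge> 8 * d"
  shows "sigma (4 * real d * N^2 / \<delta> * z + \<eta>) \<ge> 1 - 1 / (16 * real d)"
proof -
  have "4 * real d * N^2 / \<delta> * z \<ge> 4 * real d * N^2 / \<delta> * (3 * \<delta> / 4)"
    using z d0 by (intro mult_left_mono) auto
  then have cz: "4 * real d * N^2 / \<delta> * z \<ge> 3 * real d * N^2" using d0 by simp
  have "N * (S + 1) \<le> N * (real d * N + 1)" using S N3 by (intro mult_left_mono) auto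
  then have "\<bar>\<eta>\<bar> \<le> real d * N^2 + N" using eta by (simp add: algebra_simps power2_eq_square)
  moreover have "real d * N^2 \<ge> 1 * N^2" using d1 by (intro mult_right_mono) auto
  moreover have "N^2 \<ge> 3 * N" using N3 by (simp add: power2_eq_square)
  ultimately have inp: "4 * real d * N^2 / \<delta> * z + \<eta> \<ge> 2 * N" using cz unfolding abs_le_iff by linarith
  have "sigma (4 * real d * N^2 / \<delta> * z + \<eta>) \<ge> 1 - exp (- (2 * N))" by (rule sigma_ge_N[OF inp])
  moreover have "exp (- (2 * N)) = 1 / (real n * real n)"
  proof -
    have e1: "exp (-N) = 1 / real n" using nN by (simp add: exp_minus inverse_eq_divide)
    have "exp (- (2 * N)) = exp (-N) * exp (-N)" by (subst exp_add[symmetric]) (simp add: algebra_simps)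
    then show ?thesis using e1 by simp
  qed
  moreover have "real n \<ge> 8"
  proof -
    have "exp 3 \<le> exp N" using N3 by simp
    then show ?thesis using nN exp3 by linarith
  qed
  moreover have "real n \<ge> 8 * real d"
  proof -
    have "real (8 * d) \<le> real n" using n8 by (rule of_nat_mono)
    then show ?thesis by simp
  qed
  ultimately show ?thesis
  proof -
    assume a: "1 - exp (- (2 * N)) \<le> sigma (4 * real d * N^2 / \<delta> * z + \<eta>)" "exp (- (2 * N)) = 1 / (real n * real n)"
      "real n \<ge> 8" "real n \<ge> 8 * real d"
    have "real n * real n \<ge> 8 * (8 * real d)" using a by (intro mult_mono) auto
    then have "1 / (real n * real n) \<le> 1 / (16 * real d)" using d1 by (intro divide_left_mono) auto
    then show ?thesis using a by linarith
  qed
qed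

lemma off0:
  fixes N \<delta> z \<eta> S :: real
  assumes N3: "N \<ge> 3" and d1: "d \<ge> 1" and d0: "\<delta> > 0" and z: "z \<le> - \<delta>"
    and eta: "\<bar>\<eta>\<bar> \<le> N * (S + 1)" and S: "S \<le> real d * N"
  shows "sigma (4 * real d * N^2 / \<delta> * z + \<eta>) \<le> 1/4"
proof -
  have "4 * real d * N^2 / \<delta> * z \<le> 4 * real d * N^2 / \<delta> * (- \<delta>)"
    using z d0 by (intro mult_left_mono) auto
  then have cz: "4 * real d * N^2 / \<delta> * z \<le> - 4 * real d * N^2" using d0 by simp
  have "N * (S + 1) \<le> N * (real d * N + 1)" using S N3 by (intro mult_left_mono) auto
  then have "\<bar>\<eta>\<bar> \<le> real d * N^2 + N" using eta by (simp add: algebra_simps power2_eq_square)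
  moreover have "real d * N^2 \<ge> 1 * N^2" using d1 by (intro mult_right_mono) auto
  moreover have "N^2 \<ge> 3 * N" using N3 by (simp add: power2_eq_square)
  ultimately have inp: "4 * real d * N^2 / \<delta> * z + \<eta> \<le> -2" using cz N3 unfolding abs_le_iff by linarith
  have "sigma (4 * real d * N^2 / \<delta> * z + \<eta>) \<le> exp (-2)" by (rule sigma_le_N) (use inp in simp)
  then show ?thesis using exp_m2 by linarith
qed

lemma onbox:
  fixes x u v :: "nat \<Rightarrow> real" and N \<delta> :: real
  assumes N3: "N \<ge> 3" and d1: "d \<ge> 1" and d0: "0 < \<delta>" and d1': "\<delta> \<le> 1"
    and on: "\<forall>j\<in>{1..d}. 4 * real d * N^2 / \<delta> * (x j - u j) + N * ((\<Sum>t=1..d. \<bar>x t\<bar>) + 1) > -2 \<and>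
                          4 * real d * N^2 / \<delta> * (v j - x j) + N * ((\<Sum>t=1..d. \<bar>x t\<bar>) + 1) > -2"
    and uv: "\<forall>j\<in>{1..d}. -N \<le> u j \<and> v j \<le> N"
  shows "\<forall>j\<in>{1..d}. u j - \<delta>/2 < x j \<and> x j < v j + \<delta>/2"
proof -
  define S where "S = (\<Sum>t=1..d. \<bar>x t\<bar>)"
  define c where "c = 4 * real d * N^2 / \<delta>"
  define E where "E = (2 + N * (S + 1)) / c"
  have c0: "c > 0" unfolding c_def using d0 d1 N3 by simp
  have S0: "S \<ge> 0" unfolding S_def by (simp add: sum_nonneg)
  have E0: "E \<ge> 0" unfolding E_def using c0 S0 N3 by simp
  have cE: "c * E = 2 + N * (S + 1)" unfolding E_def using c0 by simp
  have lo: "x j - u j > - E" and hi: "v j - x j > - E" if j: "j \<in> {1..d}" for j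
  proof -
    note oj = bspec[OF on j]
    have o1: "c * (x j - u j) + N * (S + 1) > -2" unfolding c_def S_def using oj by (rule conjunct1)
    have o2: "c * (v j - x j) + N * (S + 1) > -2" unfolding c_def S_def using oj by (rule conjunct2)
    note o = o1 o2
    have "c * (- E) < c * (x j - u j)" using o cE by (simp only: mult_minus_right; linarith)
    then show "x j - u j > - E" by (simp only: mult_less_cancel_left_pos[OF c0])
    have "c * (- E) < c * (v j - x j)" using o cE by (simp only: mult_minus_right; linarith)
    then show "v j - x j > - E" by (simp only: mult_less_cancel_left_pos[OF c0])
  qed
  have "S \<le> (\<Sum>t=1..d. N + E)" unfolding S_def
  proof (rule sum_mono)
    fix t assume t: "t \<in> {1..d}"
    have "-N \<le> u t" "v t \<le> N" using uv t by auto
    then show "\<bar>x t\<bar> \<le> N + E" using lo[OF t] hi[OF t] unfolding abs_le_iff by linarith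
  qed
  then have hS: "S \<le> real d * (N + E)" by simp
  have hE: "4 * real d * N^2 * E = \<delta> * (2 + N * (S + 1))"
    using cE d0 unfolding c_def by (simp add: field_simps)
  have "E \<le> \<delta> / 2" by (rule key_real[OF _ N3 d0 d1' S0 E0 hE hS]) (use d1 in simp)
  then show ?thesis
  proof (intro ballI)
    fix j assume j: "j \<in> {1..d}"
    show "u j - \<delta>/2 < x j \<and> x j < v j + \<delta>/2" using lo[OF j] hi[OF j] \<open>E \<le> \<delta> / 2\<close> by linarith
  qed
qed

lemma cell_bounds:
  fixes a b w eps :: real
  assumes w0: "w > 0" and iK: "i < K" and e0: "0 < eps" and ew: "eps \<le> w / 4" and bK: "b = a + real K * w"
  shows "a \<le> a + real i * w" "a + real i * w < b" "a \<le> a + real (i + 1) * w - eps" "a + real (i + 1) * w - eps < b"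
proof -
  have iK': "real i + 1 \<le> real K" using iK by linarith
  have m: "(real i + 1) * w \<le> real K * w" using iK' w0 by (intro mult_right_mono) auto
  show "a \<le> a + real i * w" using w0 by simp
  have m': "real i * w + w \<le> real K * w" using m by (simp add: distrib_right)
  show "a + real i * w < b" using m' bK w0 by linarith
  have "w \<le> (real i + 1) * w" using w0 by simp
  then have "w \<le> real (i + 1) * w" by (simp add: add.commute)
  then show "a \<le> a + real (i + 1) * w - eps" using ew w0 by linarith
  show "a + real (i + 1) * w - eps < b" using m bK e0 by (simp add: algebra_simps)
qed

lemma idx_bounds:
  fixes a w x eps \<delta> :: real
  assumes w0: "w > 0" and dw: "\<delta> \<le> w" and e0: "eps \<ge> 0"
    and l: "a + real i * w - \<delta>/2 < x" and u: "x < a + real (i + 1) * w - eps + \<delta>/2"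
  shows "(x - a) / w - 3/2 < real i \<and> real i < (x - a) / w + 1/2"
proof
  have "real i * w < x - a + w / 2" using l dw by linarith
  then have "real i < (x - a + w / 2) / w" using w0 by (simp add: pos_less_divide_eq)
  moreover have "(x - a + w / 2) / w = (x - a) / w + 1/2" using w0 by (simp add: field_simps)
  ultimately show "real i < (x - a) / w + 1/2" by simp
  have "x - a - 3 / 2 * w < real i * w" using u dw e0 by (simp add: algebra_simps)
  then have "(x - a - 3 / 2 * w) / w < real i" using w0 by (simp add: pos_divide_less_eq)
  moreover have "(x - a - 3 / 2 * w) / w = (x - a) / w - 3/2" using w0 by (simp add: field_simps)
  ultimately show "(x - a) / w - 3/2 < real i" by simp
qed

lemma net_decomp:
  assumes inj: "inj_on js A" and rng: "js ` A \<subseteq> {1..Kn}" and out1: "\<forall>k\<in>A. wb L 1 1 (js k) = al k"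
    and out0: "\<forall>k. k \<notin> js ` A \<longrightarrow> wb L 1 1 k = 0"
  shows "net d r L Kn wb x = (\<Sum>k\<in>A. al k * fbar d r wb L (js k) 1 x)"
proof -
  have "net d r L Kn wb x = (\<Sum>j\<in>js ` A. wb L 1 1 j * fbar d r wb L j 1 x)"
    unfolding net_def using rng out0 by (intro sum.mono_neutral_right) auto
  also have "\<dots> = (\<Sum>k\<in>A. wb L 1 1 (js k) * fbar d r wb L (js k) 1 x)" using inj by (simp add: sum.reindex)
  also have "\<dots> = (\<Sum>k\<in>A. al k * fbar d r wb L (js k) 1 x)" using out1 by simp
  finally show ?thesis .
qed

lemma clip_nonneg:
  assumes d1: "d \<ge> 1" and Lip: "\<forall>x\<in>Rd d. \<forall>y\<in>Rd d. \<bar>m x - m y\<bar> \<le> CLip * dist_d d x y"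
  shows "CLip \<ge> (0::real)"
proof (rule ccontr)
  assume c: "\<not> CLip \<ge> 0"
  define e where "e = (\<lambda>j::nat. if j = 1 then 1 else (0::real))"
  have eR: "e \<in> Rd d" unfolding Rd_def e_def using d1 by auto
  have zR: "(\<lambda>_. 0) \<in> Rd d" unfolding Rd_def by auto
  have "(\<lambda>j. e j - 0) 1 \<le> L2_set (\<lambda>j. e j - 0) {1..d}" by (rule member_le_L2_set) (use d1 in auto)
  then have dd: "dist_d d e (\<lambda>_. 0) \<ge> 1" unfolding dist_d_def e_def by simp
  have "CLip * dist_d d e (\<lambda>_. 0) < 0" using c dd by (simp add: mult_neg_pos)
  moreover have "\<bar>m e - m (\<lambda>_. 0)\<bar> \<le> CLip * dist_d d e (\<lambda>_. 0)" using Lip eR zR by blast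
  ultimately show False by linarith
qed

theorem lemma6:
  fixes d :: nat and M :: real
  assumes "d \<ge> 1"
  shows "\<exists>c19 > 0. \<forall>(m :: (nat \<Rightarrow> real) \<Rightarrow> real) (CLip :: real)
      (\<delta> :: real) (\<alpha> :: real) (L :: nat) (r :: nat) (n :: nat) (K :: nat) (Kn :: nat)
      (a :: nat \<Rightarrow> real) (b :: nat \<Rightarrow> real) (\<Delta> :: real).
    bdd_above ((\<lambda>x. \<bar>m x\<bar>) ` Rd d) \<and> supnorm_d d m = M \<and>
    (\<forall>x\<in>Rd d. \<forall>y\<in>Rd d. \<bar>m x - m y\<bar> \<le> CLip * dist_d d x y) \<and>
    0 < \<delta> \<and> \<delta> \<le> 1 \<and> 1 \<le> \<alpha> \<and> \<alpha> \<le> ln (real n) \<and>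
    L \<ge> 2 \<and> r \<ge> 2 * d \<and> n \<ge> 8 * d \<and> real n \<ge> exp (real r + 1) \<and>
    K \<ge> 1 \<and> K ^ d \<le> Kn \<and>
    (\<forall>i\<in>{1..d}. a i \<in> {-\<alpha>..\<alpha>} \<and> b i \<in> {-\<alpha>..\<alpha>} \<and> b i - a i = \<Delta>) \<and> \<Delta> > 0
    \<longrightarrow>
    (\<exists>(alphas :: nat \<Rightarrow> real) (u :: nat \<Rightarrow> nat \<Rightarrow> real) (v :: nat \<Rightarrow> nat \<Rightarrow> real).
      (\<forall>k\<in>{1..K^d}. alphas k \<in> {-M..M} \<and> u k \<in> Rd d \<and> v k \<in> Rd d \<and>
         (\<forall>j\<in>{1..d}. a j \<le> u k j \<and> u k j < b j \<and> a j \<le> v k j \<and> v k j < b j)) \<and>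
      (\<forall>(js :: nat \<Rightarrow> nat) (w :: nat \<Rightarrow> nat \<Rightarrow> nat \<Rightarrow> nat \<Rightarrow> real)
          (wb :: nat \<Rightarrow> nat \<Rightarrow> nat \<Rightarrow> nat \<Rightarrow> real).
        inj_on js {1..K^d} \<and> js ` {1..K^d} \<subseteq> {1..Kn} \<and>
        (\<forall>k\<in>{1..K^d}.
          (\<forall>j\<in>{1..d}.
             w 0 (js k) j j = 4 * d * (ln (real n))^2 / \<delta> \<and>
             w 0 (js k) j 0 = - (4 * d * (ln (real n))^2 * u k j / \<delta>) \<and>
             w 0 (js k) (j + d) j = - (4 * d * (ln (real n))^2 / \<delta>) \<and>
             w 0 (js k) (j + d) 0 = 4 * d * (ln (real n))^2 * v k j / \<delta>) \<and>
          (\<forall>s t. s \<le> 2 * d \<and> s \<noteq> t \<and> s \<noteq> t + d \<and> t > 0 \<longrightarrow> w 0 (js k) s t = 0) \<and>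
          (\<forall>t\<in>{1..2*d}. w 1 (js k) 1 t = 8 * (ln (real n))^2) \<and>
          w 1 (js k) 1 0 = - 8 * (ln (real n))^2 * (2 * d - 1/2) \<and>
          (\<forall>t > 2 * d. w 1 (js k) 1 t = 0) \<and>
          (\<forall>l\<in>{2..L}. w l (js k) 1 1 = 6 * (ln (real n))^2 \<and>
              w l (js k) 1 0 = - 3 * (ln (real n))^2 \<and>
              (\<forall>t > 1. w l (js k) 1 t = 0))) \<and>
        (\<forall>k\<in>{1..K^d}. wb L 1 1 (js k) = alphas k) \<and>
        (\<forall>k. k \<notin> js ` {1..K^d} \<longrightarrow> wb L 1 1 k = 0) \<and>
        (\<forall>l\<in>{0..L-1}. \<forall>s\<in>{1..K^d}. \<forall>k i. \<bar>w l (js s) k i - wb l (js s) k i\<bar> \<le> ln (real n))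
        \<longrightarrow>
        (\<forall>x\<in>Rd d.
           (\<forall>i\<in>{1..d}. a i \<le> x i \<and> x i \<le> b i) \<and>
           (\<forall>j\<in>{0..K}. \<forall>i\<in>{1..d}. \<bar>x i - (a i + real j * (b i - a i) / real K)\<bar> \<ge> \<delta>)
           \<longrightarrow> \<bar>net d r L Kn wb x - m x\<bar>
                 \<le> c19 * (CLip * \<Delta> / real K + real (K ^ d) * (1 / real n))) \<and>
        (\<delta> \<le> \<Delta> / real K \<longrightarrow>
           (\<forall>x\<in>Rd d. \<bar>net d r L Kn wb x\<bar> \<le> M * (3 ^ d + real (K ^ d) / real n)))))"
proof -
  define c19 where "c19 = real d + \<bar>M\<bar> + 1"
  have c19pos: "c19 > 0" unfolding c19_def by (simp add: add_nonneg_pos)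
  show ?thesis
    apply (rule exI[of _ c19])
    apply (intro conjI c19pos allI impI)
    apply (elim conjE)
    subgoal premises prems for m CLip \<delta> \<alpha> L r n K Kn a b \<Delta>
    proof -
      note bdd = prems(1) and Msup = prems(2) and Lip = prems(3) and dpos = prems(4) and d1' = prems(5)
        and aN = prems(7) and L2 = prems(8) and dr = prems(9) and n8 = prems(10)
        and nexp = prems(11) and K1 = prems(12) and ab = prems(14) and Dpos = prems(15)
      have d1: "d \<ge> 1" using assms .
      have rd1: "real d \<ge> 1" using d1 by simp
      have npos: "real n > 0" using exp_gt_zero[of "real r + 1"] nexp by linarith
      have nN: "real n = exp (ln (real n))" using npos by simp
      have "ln (exp (real r + 1)) \<le> ln (real n)" using nexp npos by (subst ln_le_cancel_iff) auto
      then have rN: "real r + 1 \<le> ln (real n)" by simp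
      have "real (2 * d) \<le> real r" using dr by (rule of_nat_mono)
      then have N3: "ln (real n) \<ge> 3" using rN rd1 by simp
      have expN: "exp (- ln (real n)) = 1 / real n" using npos by (simp add: exp_minus inverse_eq_divide)
      have Mb: "\<forall>y\<in>Rd d. \<bar>m y\<bar> \<le> M"
      proof
        fix y assume y: "y \<in> Rd d"
        have "\<bar>m y\<bar> \<le> (SUP x\<in>Rd d. \<bar>m x\<bar>)" by (rule cSUP_upper[OF y bdd])
        then show "\<bar>m y\<bar> \<le> M" using Msup unfolding supnorm_d_def by simp
      qed
      have zR: "(\<lambda>_. 0) \<in> Rd d" unfolding Rd_def by simp
      have "\<bar>m (\<lambda>_. 0)\<bar> \<le> M" using Mb zR by blast
      then have M0: "M \<ge> 0" using abs_ge_zero[of "m (\<lambda>_. 0)"] by linarith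
      have CL0: "CLip \<ge> 0" by (rule clip_nonneg[OF d1 Lip])
      define wc where "wc = \<Delta> / real K"
      have Kpos: "real K > 0" using K1 by simp
      have wc0: "wc > 0" unfolding wc_def using Dpos Kpos by simp
      have bK: "\<forall>i\<in>{1..d}. b i = a i + real K * wc"
      proof
        fix i assume i: "i \<in> {1..d}"
        have "b i - a i = \<Delta>" using ab i by blast
        then show "b i = a i + real K * wc" unfolding wc_def using Kpos by simp
      qed
      define eps where "eps = min \<delta> wc / 4"
      have eps0: "eps > 0" "eps \<le> \<delta> / 4" "eps \<le> wc / 4" unfolding eps_def using dpos wc0 by auto
      define P where "P = PiE {1..d} (\<lambda>_::nat. {0..<K})"
      have Pfin: "finite P" unfolding P_def by (intro finite_PiE) auto
      have Pcard: "card P = K ^ d" unfolding P_def by (simp add: card_PiE)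
      obtain g where g: "bij_betw g {1..K^d} P"
        using finite_same_card_bij[of "{1..K^d}" P] Pfin Pcard by auto
      have gP: "g k \<in> P" if "k \<in> {1..K^d}" for k using g that by (auto simp: bij_betw_def)
      have gK: "g k j < K" if "k \<in> {1..K^d}" "j \<in> {1..d}" for k j
        using gP[OF that(1)] that(2) unfolding P_def by (auto simp: PiE_iff)
      define u where "u = (\<lambda>k j. if j \<in> {1..d} then a j + real (g k j) * wc else 0)"
      define v where "v = (\<lambda>k j. if j \<in> {1..d} then a j + real (g k j + 1) * wc - eps else 0)"
      define alphas where "alphas = (\<lambda>k. m (u k))"
      have uR: "u k \<in> Rd d" for k unfolding u_def Rd_def by auto
      have vR: "v k \<in> Rd d" for k unfolding v_def Rd_def by auto
      have cb: "a j \<le> u k j \<and> u k j < b j \<and> a j \<le> v k j \<and> v k j < b j" if "k \<in> {1..K^d}" "j \<in> {1..d}" for k j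
        using cell_bounds[OF wc0 gK[OF that] eps0(1) eps0(3) bspec[OF bK that(2)]] that(2)
        unfolding u_def v_def by simp
      have alB: "\<bar>alphas k\<bar> \<le> M" for k unfolding alphas_def using Mb uR by blast
      have uvN: "- ln (real n) \<le> u k j \<and> v k j \<le> ln (real n)" if "k \<in> {1..K^d}" "j \<in> {1..d}" for k j
      proof -
        have "a j \<in> {-\<alpha>..\<alpha>}" "b j \<in> {-\<alpha>..\<alpha>}" using ab that(2) by auto
        then show ?thesis using cb[OF that] aN by auto
      qed
      have al2: "alphas k \<in> {-M..M}" for k using alB[of k] unfolding abs_le_iff atLeastAtMost_iff by linarith
      have part1: "\<forall>k\<in>{1..K^d}. alphas k \<in> {-M..M} \<and> u k \<in> Rd d \<and> v k \<in> Rd d \<and>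
         (\<forall>j\<in>{1..d}. a j \<le> u k j \<and> u k j < b j \<and> a j \<le> v k j \<and> v k j < b j)"
        using al2 uR vR cb by blast
      show ?thesis
        apply (rule exI[of _ alphas], rule exI[of _ u], rule exI[of _ v])
        apply (rule conjI[OF part1])
        apply (intro allI impI)
        apply (elim conjE)
        subgoal premises G for js w wb
        proof -
          have decomp: "net d r L Kn wb x = (\<Sum>k\<in>{1..K^d}. alphas k * fbar d r wb L (js k) 1 x)" for x
            by (rule net_decomp[where js=js and A="{1..K^d}" and Kn=Kn and wb=wb and L=L and al=alphas and d=d and r=r and x=x, OF G(1) G(2) G(4) G(5)])
          have Pk: "\<forall>l\<in>{0..L-1}. \<forall>ka i. \<bar>w l (js k) ka i - wb l (js k) ka i\<bar> \<le> ln (real n)"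
            if "k \<in> {1..K^d}" for k using G(6) that by blast
          have NF1: "fbar d r wb L (js k) 1 x \<ge> 1 - exp (- ln (real n))"
            if k: "k \<in> {1..K^d}" and h: "\<forall>t\<in>{1..2*d}. fbar d r wb 1 (js k) t x \<ge> 1 - 1/(16 * real d)" for k x
            using bspec[OF G(3) k] Pk[OF k] h
            apply (elim conjE)
            apply (rule neuron(1)[where w=w and W=wb and q="js k" and u="u k" and v="v k" and N="ln (real n)"
                  and d=d and r=r and L=L and \<delta>=\<delta> and x=x, OF N3 d1 dr rN L2 dpos])
            apply (simp_all only: of_nat_mult of_nat_numeral)
            done
          have NF2: "fbar d r wb L (js k) 1 x \<le> exp (- ln (real n))"
            if k: "k \<in> {1..K^d}" and h: "\<exists>t\<in>{1..2*d}. fbar d r wb 1 (js k) t x \<le> 1/4" for k x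
            using bspec[OF G(3) k] Pk[OF k] h
            apply (elim conjE)
            apply (rule neuron(2)[where w=w and W=wb and q="js k" and u="u k" and v="v k" and N="ln (real n)"
                  and d=d and r=r and L=L and \<delta>=\<delta> and x=x, OF N3 d1 dr rN L2 dpos])
            apply (simp_all only: of_nat_mult of_nat_numeral)
            done
          have NF3: "\<exists>\<eta>. \<bar>\<eta>\<bar> \<le> ln (real n) * ((\<Sum>t=1..d. \<bar>x t\<bar>) + 1) \<and>
                fbar d r wb 1 (js k) j x = sigma (4 * real d * (ln (real n))^2 / \<delta> * (x j - u k j) + \<eta>)"
            if k: "k \<in> {1..K^d}" and j: "j \<in> {1..d}" for k x j
            using bspec[OF G(3) k] Pk[OF k] j
            apply (elim conjE)
            apply (rule neuron(3)[where w=w and W=wb and q="js k" and u="u k" and v="v k" and N="ln (real n)"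
                  and d=d and r=r and L=L and \<delta>=\<delta> and x=x, OF N3 d1 dr rN L2 dpos])
            apply (simp_all only: of_nat_mult of_nat_numeral)
            done
          have NF4: "\<exists>\<eta>. \<bar>\<eta>\<bar> \<le> ln (real n) * ((\<Sum>t=1..d. \<bar>x t\<bar>) + 1) \<and>
                fbar d r wb 1 (js k) (j + d) x = sigma (4 * real d * (ln (real n))^2 / \<delta> * (v k j - x j) + \<eta>)"
            if k: "k \<in> {1..K^d}" and j: "j \<in> {1..d}" for k x j
            using bspec[OF G(3) k] Pk[OF k] j
            apply (elim conjE)
            apply (rule neuron(4)[where w=w and W=wb and q="js k" and u="u k" and v="v k" and N="ln (real n)"
                  and d=d and r=r and L=L and \<delta>=\<delta> and x=x, OF N3 d1 dr rN L2 dpos])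
            apply (simp_all only: of_nat_mult of_nat_numeral)
            done
          have Fr: "0 < fbar d r wb L (js k) 1 x \<and> fbar d r wb L (js k) 1 x < 1" for k x
            by (rule fbar_range) (use L2 in simp)
          have C1: "\<forall>x\<in>Rd d.
           (\<forall>i\<in>{1..d}. a i \<le> x i \<and> x i \<le> b i) \<and>
           (\<forall>j\<in>{0..K}. \<forall>i\<in>{1..d}. \<bar>x i - (a i + real j * (b i - a i) / real K)\<bar> \<ge> \<delta>)
           \<longrightarrow> \<bar>net d r L Kn wb x - m x\<bar>
                 \<le> c19 * (CLip * \<Delta> / real K + real (K ^ d) * (1 / real n))"
          proof (intro ballI impI)
            fix x assume xR: "x \<in> Rd d" and xc: "(\<forall>i\<in>{1..d}. a i \<le> x i \<and> x i \<le> b i) \<and>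
              (\<forall>j\<in>{0..K}. \<forall>i\<in>{1..d}. \<bar>x i - (a i + real j * (b i - a i) / real K)\<bar> \<ge> \<delta>)"
            have box: "\<forall>i\<in>{1..d}. a i \<le> x i \<and> x i \<le> b i" using xc by blast
            have good: "\<forall>i\<in>{1..d}. \<forall>jj\<in>{0..K}. \<bar>x i - (a i + real jj * (b i - a i) / real K)\<bar> \<ge> \<delta>"
              using xc by blast
            have "\<forall>j\<in>{1..d}. \<exists>i. i < K \<and> a j + real i * wc + \<delta> \<le> x j \<and> x j + \<delta> \<le> a j + real (i + 1) * wc"
            proof
              fix j assume j: "j \<in> {1..d}"
              show "\<exists>i. i < K \<and> a j + real i * wc + \<delta> \<le> x j \<and> x j + \<delta> \<le> a j + real (i + 1) * wc"
                by (rule cell_of[OF wc0 K1 bspec[OF bK j]]) (use box good j dpos in auto)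
            qed
            from bchoice[OF this] obtain ii where
              ii: "\<forall>j\<in>{1..d}. ii j < K \<and> a j + real (ii j) * wc + \<delta> \<le> x j \<and> x j + \<delta> \<le> a j + real (ii j + 1) * wc"
              by blast
            define idx where "idx = restrict ii {1..d}"
            have idxP: "idx \<in> P" unfolding idx_def P_def using ii by (auto simp: restrict_PiE_iff)
            have gimg: "g ` {1..K^d} = P" using g by (simp add: bij_betw_def)
            define k0 where "k0 = inv_into {1..K^d} g idx"
            have k0A: "k0 \<in> {1..K^d}" unfolding k0_def by (rule inv_into_into) (use idxP gimg in simp)
            have gk0: "g k0 = idx" unfolding k0_def by (rule f_inv_into_f) (use idxP gimg in simp)
            have gk0j: "g k0 j = ii j" if "j \<in> {1..d}" for j using gk0 that unfolding idx_def by simp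
            have "(\<Sum>t=1..d. \<bar>x t\<bar>) \<le> of_nat (card {1..d}) * ln (real n)"
            proof (rule sum_bounded_above)
              fix t assume t: "t \<in> {1..d}"
              have "a t \<in> {-\<alpha>..\<alpha>}" "b t \<in> {-\<alpha>..\<alpha>}" "a t \<le> x t" "x t \<le> b t" using ab box t by auto
              then show "\<bar>x t\<bar> \<le> ln (real n)" using aN unfolding abs_le_iff by auto
            qed
            then have S: "(\<Sum>t=1..d. \<bar>x t\<bar>) \<le> real d * ln (real n)" by simp
            have on_k0: "fbar d r wb L (js k0) 1 x \<ge> 1 - exp (- ln (real n))"
            proof (rule NF1[OF k0A], intro ballI)
              fix t assume t: "t \<in> {1..2*d}"
              show "fbar d r wb 1 (js k0) t x \<ge> 1 - 1/(16 * real d)"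
              proof (cases "t \<le> d")
                case True
                then have j: "t \<in> {1..d}" using t by auto
                obtain \<eta> where e: "\<bar>\<eta>\<bar> \<le> ln (real n) * ((\<Sum>t=1..d. \<bar>x t\<bar>) + 1)"
                  "fbar d r wb 1 (js k0) t x = sigma (4 * real d * (ln (real n))^2 / \<delta> * (x t - u k0 t) + \<eta>)"
                  using NF3[OF k0A j] by blast
                have uk: "u k0 t = a t + real (ii t) * wc" unfolding u_def using j gk0j[OF j] by simp
                have "a t + real (ii t) * wc + \<delta> \<le> x t" using ii j by blast
                then have z: "x t - u k0 t \<ge> 3 * \<delta> / 4" using uk dpos by linarith
                show ?thesis unfolding e(2) by (rule on0[OF N3 d1 dpos z e(1) S nN n8])
              next
                case False
                then obtain j where j: "j \<in> {1..d}" and tj: "t = j + d" using t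
                  by (intro that[of "t - d"]) auto
                obtain \<eta> where e: "\<bar>\<eta>\<bar> \<le> ln (real n) * ((\<Sum>t=1..d. \<bar>x t\<bar>) + 1)"
                  "fbar d r wb 1 (js k0) (j + d) x = sigma (4 * real d * (ln (real n))^2 / \<delta> * (v k0 j - x j) + \<eta>)"
                  using NF4[OF k0A j] by blast
                have vk: "v k0 j = a j + real (ii j + 1) * wc - eps" unfolding v_def using j gk0j[OF j] by simp
                have "x j + \<delta> \<le> a j + real (ii j + 1) * wc" using ii j by blast
                then have z: "v k0 j - x j \<ge> 3 * \<delta> / 4" using vk eps0 dpos by linarith
                show ?thesis unfolding tj e(2) by (rule on0[OF N3 d1 dpos z e(1) S nN n8])
              qed
            qed
            have off_k: "fbar d r wb L (js k) 1 x \<le> 1 / real n" if k: "k \<in> {1..K^d}" "k \<noteq> k0" for k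
            proof -
              have "\<exists>j\<in>{1..d}. g k j \<noteq> ii j"
              proof (rule ccontr)
                assume "\<not> (\<exists>j\<in>{1..d}. g k j \<noteq> ii j)"
                then have "g k = g k0"
                  using gP[OF k(1)] gP[OF k0A] gk0j unfolding P_def by (intro PiE_ext) auto
                then have "k = k0" using g k(1) k0A by (auto simp: bij_betw_def inj_on_def)
                then show False using k(2) by simp
              qed
              then obtain j where j: "j \<in> {1..d}" and gj: "g k j \<noteq> ii j" by blast
              have "\<exists>t\<in>{1..2*d}. fbar d r wb 1 (js k) t x \<le> 1/4"
              proof (cases "g k j < ii j")
                case True
                obtain \<eta> where e: "\<bar>\<eta>\<bar> \<le> ln (real n) * ((\<Sum>t=1..d. \<bar>x t\<bar>) + 1)"
                  "fbar d r wb 1 (js k) (j + d) x = sigma (4 * real d * (ln (real n))^2 / \<delta> * (v k j - x j) + \<eta>)"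
                  using NF4[OF k(1) j] by blast
                have "real (g k j + 1) \<le> real (ii j)" using True by simp
                then have "real (g k j + 1) * wc \<le> real (ii j) * wc" using wc0 by (intro mult_right_mono) auto
                moreover have "v k j = a j + real (g k j + 1) * wc - eps" unfolding v_def using j by simp
                moreover have "a j + real (ii j) * wc + \<delta> \<le> x j" using ii j by blast
                ultimately have z: "v k j - x j \<le> - \<delta>" using eps0 by linarith
                have "fbar d r wb 1 (js k) (j + d) x \<le> 1/4" unfolding e(2) by (rule off0[OF N3 d1 dpos z e(1) S])
                then show ?thesis using j by (intro bexI[of _ "j + d"]) auto
              next
                case False
                then have "ii j + 1 \<le> g k j" using gj by simp
                then have "real (ii j + 1) \<le> real (g k j)" by (rule of_nat_mono)
                then have "real (ii j + 1) * wc \<le> real (g k j) * wc" using wc0 by (intro mult_right_mono) auto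
                moreover have "u k j = a j + real (g k j) * wc" unfolding u_def using j by simp
                moreover have "x j + \<delta> \<le> a j + real (ii j + 1) * wc" using ii j by blast
                ultimately have z: "x j - u k j \<le> - \<delta>" by linarith
                obtain \<eta> where e: "\<bar>\<eta>\<bar> \<le> ln (real n) * ((\<Sum>t=1..d. \<bar>x t\<bar>) + 1)"
                  "fbar d r wb 1 (js k) j x = sigma (4 * real d * (ln (real n))^2 / \<delta> * (x j - u k j) + \<eta>)"
                  using NF3[OF k(1) j] by blast
                have "fbar d r wb 1 (js k) j x \<le> 1/4" unfolding e(2) by (rule off0[OF N3 d1 dpos z e(1) S])
                then show ?thesis using j by (intro bexI[of _ j]) auto
              qed
              then show ?thesis using NF2[OF k(1)] expN by simp
            qed
            define F where "F = (\<lambda>k. fbar d r wb L (js k) 1 x)"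
            have dec: "net d r L Kn wb x - m x = (alphas k0 * F k0 - m x) + (\<Sum>k\<in>{1..K^d} - {k0}. alphas k * F k)"
              unfolding decomp F_def using k0A by (simp add: sum.remove)
            have "\<bar>\<Sum>k\<in>{1..K^d} - {k0}. alphas k * F k\<bar> \<le> (\<Sum>k\<in>{1..K^d} - {k0}. \<bar>alphas k * F k\<bar>)"
              by (rule sum_abs)
            also have "\<dots> \<le> (\<Sum>k\<in>{1..K^d} - {k0}. M * (1 / real n))"
            proof (rule sum_mono)
              fix k assume k: "k \<in> {1..K^d} - {k0}"
              have "\<bar>F k\<bar> \<le> 1 / real n" using off_k[of k] k Fr[of k x] unfolding F_def by auto
              then show "\<bar>alphas k * F k\<bar> \<le> M * (1 / real n)" unfolding abs_mult
                using alB[of k] by (intro mult_mono) auto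
            qed
            also have "\<dots> = (real (K^d) - 1) * (M * (1 / real n))"
            proof -
              have "card ({1..K^d} - {k0}) = K^d - 1" using k0A by simp
              moreover have "K^d \<ge> 1" using K1 by simp
              ultimately show ?thesis by (simp add: of_nat_diff)
            qed
            finally have b1: "\<bar>\<Sum>k\<in>{1..K^d} - {k0}. alphas k * F k\<bar> \<le> (real (K^d) - 1) * (M * (1 / real n))" .
            have "dist_d d (u k0) x \<le> (\<Sum>j\<in>{1..d}. \<bar>u k0 j - x j\<bar>)" unfolding dist_d_def by (rule L2_set_le_sum_abs)
            also have "\<dots> \<le> (\<Sum>j\<in>{1..d}. wc)"
            proof (rule sum_mono)
              fix j assume j: "j \<in> {1..d}"
              have "u k0 j = a j + real (ii j) * wc" unfolding u_def using gk0j[OF j] j by simp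
              moreover have "a j + real (ii j + 1) * wc = a j + real (ii j) * wc + wc" by (simp add: algebra_simps)
              moreover have "a j + real (ii j) * wc + \<delta> \<le> x j" "x j + \<delta> \<le> a j + real (ii j + 1) * wc"
                using ii j by blast+
              ultimately show "\<bar>u k0 j - x j\<bar> \<le> wc" using dpos unfolding abs_le_iff by linarith
            qed
            finally have dist: "dist_d d (u k0) x \<le> real d * wc" by simp
            have "\<bar>alphas k0 - m x\<bar> \<le> CLip * dist_d d (u k0) x" unfolding alphas_def using Lip uR xR by blast
            also have "\<dots> \<le> CLip * (real d * wc)" using dist CL0 by (intro mult_left_mono) auto
            finally have a1: "\<bar>alphas k0 - m x\<bar> \<le> CLip * (real d * wc)" .
            have "1 - F k0 \<le> 1 / real n" using on_k0 expN unfolding F_def by simp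
            moreover have "1 - F k0 \<ge> 0" using Fr[of k0 x] unfolding F_def by simp
            ultimately have "\<bar>alphas k0\<bar> * (1 - F k0) \<le> M * (1 / real n)" using alB[of k0] by (intro mult_mono) auto
            moreover have "alphas k0 * F k0 - m x = (alphas k0 - m x) - alphas k0 * (1 - F k0)" by (simp add: algebra_simps)
            then have "\<bar>alphas k0 * F k0 - m x\<bar> \<le> \<bar>alphas k0 - m x\<bar> + \<bar>alphas k0 * (1 - F k0)\<bar>"
              by (simp only: abs_triangle_ineq4)
            moreover have "\<bar>alphas k0 * (1 - F k0)\<bar> = \<bar>alphas k0\<bar> * (1 - F k0)" using \<open>1 - F k0 \<ge> 0\<close> by (simp add: abs_mult)
            ultimately have b2: "\<bar>alphas k0 * F k0 - m x\<bar> \<le> CLip * (real d * wc) + M * (1 / real n)"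
              using a1 by linarith
            have tot: "\<bar>net d r L Kn wb x - m x\<bar> \<le> real d * (CLip * wc) + M * (real (K^d) * (1 / real n))"
            proof -
              have "\<bar>net d r L Kn wb x - m x\<bar> \<le> \<bar>alphas k0 * F k0 - m x\<bar> + \<bar>\<Sum>k\<in>{1..K^d} - {k0}. alphas k * F k\<bar>"
                unfolding dec by (rule abs_triangle_ineq)
              also have "\<dots> \<le> CLip * (real d * wc) + M * (1 / real n) + (real (K^d) - 1) * (M * (1 / real n))"
                using b1 b2 by linarith
              also have "\<dots> = real d * (CLip * wc) + M * (real (K^d) * (1 / real n))" by (simp add: algebra_simps)
              finally show ?thesis .
            qed
            define X where "X = CLip * wc"
            define Y where "Y = real (K^d) * (1 / real n)"
            have X0: "X \<ge> 0" unfolding X_def using CL0 wc0 by simp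
            have Y0: "Y \<ge> 0" unfolding Y_def using npos by simp
            have "real d * X \<le> c19 * X" unfolding c19_def using X0 by (intro mult_right_mono) auto
            moreover have "M * Y \<le> c19 * Y" unfolding c19_def using Y0 by (intro mult_right_mono) auto
            moreover have "CLip * \<Delta> / real K = X" unfolding X_def wc_def by simp
            ultimately have "real d * X + M * Y \<le> c19 * (CLip * \<Delta> / real K + Y)" by (simp add: distrib_left)
            then show "\<bar>net d r L Kn wb x - m x\<bar> \<le> c19 * (CLip * \<Delta> / real K + real (K ^ d) * (1 / real n))"
              using tot unfolding X_def Y_def by linarith
          qed
          have C2: "\<delta> \<le> \<Delta> / real K \<longrightarrow>
           (\<forall>x\<in>Rd d. \<bar>net d r L Kn wb x\<bar> \<le> M * (3 ^ d + real (K ^ d) / real n))"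
          proof (intro impI ballI)
            assume dw: "\<delta> \<le> \<Delta> / real K"
            then have dw': "\<delta> \<le> wc" unfolding wc_def .
            fix x assume xR: "x \<in> Rd d"
            define F where "F = (\<lambda>k. fbar d r wb L (js k) 1 x)"
            define On where "On = {k \<in> {1..K^d}. \<forall>t\<in>{1..2*d}. fbar d r wb 1 (js k) t x > 1/4}"
            have OnA: "On \<subseteq> {1..K^d}" unfolding On_def by auto
            have offF: "F k \<le> 1 / real n" if k: "k \<in> {1..K^d} - On" for k
            proof -
              have "\<exists>t\<in>{1..2*d}. fbar d r wb 1 (js k) t x \<le> 1/4" using k unfolding On_def by (auto simp: not_less)
              then show ?thesis using NF2[of k] k expN unfolding F_def by auto
            qed
            have cardOn: "card On \<le> 3 ^ d"
            proof -
              define T where "T = (\<lambda>j. {i::nat. (x j - a j) / wc - 3/2 < real i \<and> real i < (x j - a j) / wc + 1/2})"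
              have sub: "g ` On \<subseteq> PiE {1..d} T"
              proof
                fix p assume "p \<in> g ` On"
                then obtain k where k: "k \<in> On" "p = g k" by blast
                have kA: "k \<in> {1..K^d}" using k OnA by auto
                have inb: "\<forall>j\<in>{1..d}. u k j - \<delta>/2 < x j \<and> x j < v k j + \<delta>/2"
                proof (rule onbox[OF N3 d1 dpos d1'])
                  show "\<forall>j\<in>{1..d}. - ln (real n) \<le> u k j \<and> v k j \<le> ln (real n)" using uvN kA by blast
                  show "\<forall>j\<in>{1..d}. 4 * real d * (ln (real n))^2 / \<delta> * (x j - u k j) + ln (real n) * ((\<Sum>t=1..d. \<bar>x t\<bar>) + 1) > -2 \<and>
                          4 * real d * (ln (real n))^2 / \<delta> * (v k j - x j) + ln (real n) * ((\<Sum>t=1..d. \<bar>x t\<bar>) + 1) > -2"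
                  proof
                    fix j assume j: "j \<in> {1..d}"
                    have f1: "fbar d r wb 1 (js k) j x > 1/4" and f2: "fbar d r wb 1 (js k) (j + d) x > 1/4"
                      using k(1) j unfolding On_def by auto
                    obtain \<eta>1 where e1: "\<bar>\<eta>1\<bar> \<le> ln (real n) * ((\<Sum>t=1..d. \<bar>x t\<bar>) + 1)"
                      "fbar d r wb 1 (js k) j x = sigma (4 * real d * (ln (real n))^2 / \<delta> * (x j - u k j) + \<eta>1)"
                      using NF3[OF kA j] by blast
                    obtain \<eta>2 where e2: "\<bar>\<eta>2\<bar> \<le> ln (real n) * ((\<Sum>t=1..d. \<bar>x t\<bar>) + 1)"
                      "fbar d r wb 1 (js k) (j + d) x = sigma (4 * real d * (ln (real n))^2 / \<delta> * (v k j - x j) + \<eta>2)"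
                      using NF4[OF kA j] by blast
                    have i1: "4 * real d * (ln (real n))^2 / \<delta> * (x j - u k j) + \<eta>1 > -2"
                    proof (rule ccontr)
                      assume "\<not> ?thesis"
                      then have "sigma (4 * real d * (ln (real n))^2 / \<delta> * (x j - u k j) + \<eta>1) \<le> exp (- 2)"
                        by (intro sigma_le_N) simp
                      then show False using f1 exp_m2 unfolding e1(2) by linarith
                    qed
                    have i2: "4 * real d * (ln (real n))^2 / \<delta> * (v k j - x j) + \<eta>2 > -2"
                    proof (rule ccontr)
                      assume "\<not> ?thesis"
                      then have "sigma (4 * real d * (ln (real n))^2 / \<delta> * (v k j - x j) + \<eta>2) \<le> exp (- 2)"
                        by (intro sigma_le_N) simp
                      then show False using f2 exp_m2 unfolding e2(2) by linarith
                    qed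
                    have "\<eta>1 \<le> ln (real n) * ((\<Sum>t=1..d. \<bar>x t\<bar>) + 1)" "\<eta>2 \<le> ln (real n) * ((\<Sum>t=1..d. \<bar>x t\<bar>) + 1)"
                      using e1(1) e2(1) by (simp_all add: abs_le_iff)
                    then show "4 * real d * (ln (real n))^2 / \<delta> * (x j - u k j) + ln (real n) * ((\<Sum>t=1..d. \<bar>x t\<bar>) + 1) > -2 \<and>
                          4 * real d * (ln (real n))^2 / \<delta> * (v k j - x j) + ln (real n) * ((\<Sum>t=1..d. \<bar>x t\<bar>) + 1) > -2"
                      using i1 i2 by (intro conjI; linarith)
                  qed
                qed
                have gkP: "g k \<in> P" using gP[OF kA] .
                show "p \<in> PiE {1..d} T" unfolding k(2) PiE_iff
                proof
                  show "\<forall>j\<in>{1..d}. g k j \<in> T j"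
                  proof
                    fix j assume j: "j \<in> {1..d}"
                    have l: "a j + real (g k j) * wc - \<delta>/2 < x j" using inb j unfolding u_def by auto
                    have uu: "x j < a j + real (g k j + 1) * wc - eps + \<delta>/2" using inb j unfolding v_def by auto
                    show "g k j \<in> T j" unfolding T_def using idx_bounds[OF wc0 dw' _ l uu] eps0 by auto
                  qed
                  show "g k \<in> extensional {1..d}" using gkP unfolding P_def by (simp add: PiE_iff)
                qed
              qed
              have finT: "finite (T j)" for j unfolding T_def by (rule count3(1))
              have cT: "card (T j) \<le> 3" for j unfolding T_def by (rule count3(2))
              have "card On = card (g ` On)"
                by (rule card_image[symmetric], rule inj_on_subset[of g "{1..K^d}"]) (use g OnA in \<open>auto simp: bij_betw_def\<close>)
              also have "\<dots> \<le> card (PiE {1..d} T)" by (rule card_mono[OF _ sub]) (intro finite_PiE; simp add: finT)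
              also have "\<dots> = (\<Prod>j\<in>{1..d}. card (T j))" by (simp add: card_PiE)
              also have "\<dots> \<le> 3 ^ d" by (rule prod_le_power) (use cT in auto)
              finally show ?thesis .
            qed
            have "\<bar>net d r L Kn wb x\<bar> \<le> (\<Sum>k\<in>{1..K^d}. \<bar>alphas k * F k\<bar>)"
              unfolding decomp F_def by (rule sum_abs)
            also have "\<dots> = (\<Sum>k\<in>{1..K^d} - On. \<bar>alphas k * F k\<bar>) + (\<Sum>k\<in>On. \<bar>alphas k * F k\<bar>)"
              by (rule sum.subset_diff[OF OnA]) simp
            also have "\<dots> \<le> of_nat (card ({1..K^d} - On)) * (M * (1 / real n)) + of_nat (card On) * M"
            proof (rule add_mono)
              show "(\<Sum>k\<in>{1..K^d} - On. \<bar>alphas k * F k\<bar>) \<le> of_nat (card ({1..K^d} - On)) * (M * (1 / real n))"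
              proof (rule sum_bounded_above)
                fix k assume k: "k \<in> {1..K^d} - On"
                have "\<bar>F k\<bar> \<le> 1 / real n" using offF[OF k] Fr[of k x] unfolding F_def by auto
                then show "\<bar>alphas k * F k\<bar> \<le> M * (1 / real n)" unfolding abs_mult
                  using alB[of k] by (intro mult_mono) auto
              qed
              show "(\<Sum>k\<in>On. \<bar>alphas k * F k\<bar>) \<le> of_nat (card On) * M"
              proof (rule sum_bounded_above)
                fix k assume k: "k \<in> On"
                have "\<bar>F k\<bar> \<le> 1" using Fr[of k x] unfolding F_def by auto
                then have "\<bar>alphas k\<bar> * \<bar>F k\<bar> \<le> M * 1" using alB[of k] by (intro mult_mono) auto
                then show "\<bar>alphas k * F k\<bar> \<le> M" by (simp add: abs_mult)
              qed
            qed
            also have "\<dots> \<le> real (K^d) * (M * (1 / real n)) + 3 ^ d * M"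
            proof (rule add_mono)
              have "card ({1..K^d} - On) \<le> card {1..K^d::nat}" by (rule card_mono) auto
              then have "card ({1..K^d} - On) \<le> K^d" by simp
              then have "real (card ({1..K^d} - On)) \<le> real (K^d)" by (rule of_nat_mono)
              then show "of_nat (card ({1..K^d} - On)) * (M * (1 / real n)) \<le> real (K^d) * (M * (1 / real n))"
                using M0 npos by (intro mult_right_mono) auto
              have "real (card On) \<le> real (3 ^ d)" using cardOn by (rule of_nat_mono)
              then show "of_nat (card On) * M \<le> 3 ^ d * M" using M0 by (intro mult_right_mono) auto
            qed
            also have "\<dots> = M * (3 ^ d + real (K ^ d) / real n)" by (simp add: algebra_simps)
            finally show "\<bar>net d r L Kn wb x\<bar> \<le> M * (3 ^ d + real (K ^ d) / real n)" .
          qed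
          show ?thesis by (rule conjI[OF C1 C2])
        qed
        done
    qed
    done
qed

end
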